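(* Let $X$ be an infinite set with the discrete topology and let $G$ be a subgroup of the permutation group $\mathrm S(X)$ endowed with the permutation topology $\tau_\partial$. Then the Roelcke uniformity $L\wedge R$ of $G$ coincides with the uniformity $R_{\mathcal K}$, whose base consists of the coverings $\{O g\,\mathrm{St}_{x_1,\dots,x_n}\mid g\in G\}$ with $O$ a neighbourhood of the identity of $G$ and $x_1,\dots,x_n\in X$, $n\in\mathbb N$.
   Context: The permutation topology $\tau_\partial$ on $G$ is the group topology in which the pointwise stabilizers $\mathrm{St}_{x_1,\dots,x_n}=\{g\in G\mid g(x_i)=x_i\}$, $x_1,\dots,x_n\in X$, form a base of neighbourhoods of the identity. The Roelcke uniformity $L\wedge R$ is the greatest lower bound of the left and right uniformities; its base consists of the coverings $\{UgU\mid g\in G\}$, $U$ a neighbourhood of the identity. *)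

theory Defs
  imports "HOL-Combinatorics.Permutations"
begin

definition perm_subgroup :: "'a set \<Rightarrow> ('a \<Rightarrow> 'a) set \<Rightarrow> bool" where
  "perm_subgroup X G \<longleftrightarrow> (\<forall>g\<in>G. g permutes X) \<and> id \<in> G \<and>
     (\<forall>g\<in>G. \<forall>h\<in>G. g \<circ> h \<in> G) \<and> (\<forall>g\<in>G. inv g \<in> G)"

definition stab :: "('a \<Rightarrow> 'a) set \<Rightarrow> 'a set \<Rightarrow> ('a \<Rightarrow> 'a) set" where
  "stab G F = {g\<in>G. \<forall>x\<in>F. g x = x}"

text \<open>Neighbourhoods of the identity of G in the permutation topology.\<close>
definition perm_nhd_id :: "'a set \<Rightarrow> ('a \<Rightarrow> 'a) set \<Rightarrow> ('a \<Rightarrow> 'a) set \<Rightarrow> bool" where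
  "perm_nhd_id X G U \<longleftrightarrow> U \<subseteq> G \<and> (\<exists>F. finite F \<and> F \<subseteq> X \<and> stab G F \<subseteq> U)"

definition setcomp :: "('a \<Rightarrow> 'a) set \<Rightarrow> ('a \<Rightarrow> 'a) set \<Rightarrow> ('a \<Rightarrow> 'a) set" where
  "setcomp A B = {a \<circ> b | a b. a \<in> A \<and> b \<in> B}"

definition roelcke_base :: "'a set \<Rightarrow> ('a \<Rightarrow> 'a) set \<Rightarrow> ('a \<Rightarrow> 'a) set set set" where
  "roelcke_base X G = {(\<lambda>g. setcomp (setcomp U {g}) U) ` G | U. perm_nhd_id X G U}"

definition RK_base :: "'a set \<Rightarrow> ('a \<Rightarrow> 'a) set \<Rightarrow> ('a \<Rightarrow> 'a) set set set" where
  "RK_base X G = {(\<lambda>g. setcomp (setcomp V {g}) (stab G F)) ` G | V F.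
                    perm_nhd_id X G V \<and> finite F \<and> F \<subseteq> X}"

definition refines :: "'b set set \<Rightarrow> 'b set set \<Rightarrow> bool" where
  "refines C D \<longleftrightarrow> (\<forall>A\<in>C. \<exists>B\<in>D. A \<subseteq> B)"

definition unif_from_base :: "'b set \<Rightarrow> 'b set set set \<Rightarrow> 'b set set set" where
  "unif_from_base S Base = {C. C \<subseteq> Pow S \<and> \<Union>C = S \<and> (\<exists>B\<in>Base. refines B C)}"

end

theory Submission
  imports Defs
begin

lemma refines_trans: "refines A B \<Longrightarrow> refines B C \<Longrightarrow> refines A C"
  unfolding refines_def by (meson order_trans)

lemma unif_mono:
  assumes "\<And>B. B \<in> B1 \<Longrightarrow> \<exists>B'\<in>B2. refines B' B"
  shows "unif_from_base S B1 \<subseteq> unif_from_base S B2"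
proof
  fix C assume "C \<in> unif_from_base S B1"
  then have C: "C \<subseteq> Pow S" "\<Union>C = S" and "\<exists>B\<in>B1. refines B C"
    unfolding unif_from_base_def by auto
  then obtain B where B: "B \<in> B1" "refines B C" by blast
  obtain B' where "B' \<in> B2" "refines B' B" using assms[OF B(1)] by blast
  with B(2) have "B' \<in> B2" "refines B' C" using refines_trans by blast+
  then show "C \<in> unif_from_base S B2" unfolding unif_from_base_def using C by blast
qed


lemma setcomp_mono: "A \<subseteq> A' \<Longrightarrow> B \<subseteq> B' \<Longrightarrow> setcomp A B \<subseteq> setcomp A' B'"
  unfolding setcomp_def by blast

theorem proposition3p0:
  fixes X :: "'a set" and G :: "('a \<Rightarrow> 'a) set"
  assumes "infinite X" and "perm_subgroup X G"
  shows "unif_from_base G (roelcke_base X G) = unif_from_base G (RK_base X G)"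
proof
  show "unif_from_base G (RK_base X G) \<subseteq> unif_from_base G (roelcke_base X G)"
  proof (rule unif_mono)
    fix B assume "B \<in> RK_base X G"
    then obtain V F where B: "B = (\<lambda>g. setcomp (setcomp V {g}) (stab G F)) ` G"
      and V: "perm_nhd_id X G V" and F: "finite F" "F \<subseteq> X"
      unfolding RK_base_def by blast
    from V obtain F' where F': "finite F'" "F' \<subseteq> X" "stab G F' \<subseteq> V"
      unfolding perm_nhd_id_def by blast
    define U where "U = stab G (F \<union> F')"
    have U1: "U \<subseteq> V" using F' unfolding U_def stab_def by blast
    have U2: "U \<subseteq> stab G F" unfolding U_def stab_def by blast
    have nU: "perm_nhd_id X G U" unfolding perm_nhd_id_def
      using F F' by (auto simp: U_def stab_def intro!: exI[of _ "F \<union> F'"])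
    let ?R = "(\<lambda>g. setcomp (setcomp U {g}) U) ` G"
    have "?R \<in> roelcke_base X G" unfolding roelcke_base_def using nU by auto
    moreover have "refines ?R B"
      unfolding refines_def B
    proof
      fix A assume "A \<in> ?R"
      then obtain g where g: "g \<in> G" "A = setcomp (setcomp U {g}) U" by blast
      have "A \<subseteq> setcomp (setcomp V {g}) (stab G F)"
        unfolding g(2) by (intro setcomp_mono U1 U2 order_refl)
      then show "\<exists>B'\<in>(\<lambda>g. setcomp (setcomp V {g}) (stab G F)) ` G. A \<subseteq> B'"
        using g(1) by blast
    qed
    ultimately show "\<exists>B'\<in>roelcke_base X G. refines B' B" by blast
  qed
next
  show "unif_from_base G (roelcke_base X G) \<subseteq> unif_from_base G (RK_base X G)"
  proof (rule unif_mono)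
    fix B assume "B \<in> roelcke_base X G"
    then obtain U where B: "B = (\<lambda>g. setcomp (setcomp U {g}) U) ` G"
      and nU: "perm_nhd_id X G U"
      unfolding roelcke_base_def by blast
    from nU obtain F where F: "finite F" "F \<subseteq> X" "stab G F \<subseteq> U"
      unfolding perm_nhd_id_def by blast
    let ?R = "(\<lambda>g. setcomp (setcomp U {g}) (stab G F)) ` G"
    have "?R \<in> RK_base X G" unfolding RK_base_def using nU F(1,2) by auto
    moreover have "refines ?R B"
      unfolding refines_def B
    proof
      fix A assume "A \<in> ?R"
      then obtain g where g: "g \<in> G" "A = setcomp (setcomp U {g}) (stab G F)" by blast
      have "A \<subseteq> setcomp (setcomp U {g}) U"
        unfolding g(2) by (intro setcomp_mono F(3) order_refl)
      then show "\<exists>B'\<in>(\<lambda>g. setcomp (setcomp U {g}) U) ` G. A \<subseteq> B'"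
        using g(1) by blast
    qed
    ultimately show "\<exists>B'\<in>RK_base X G. refines B' B" by blast
  qed
qed

end
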